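(* Let $\omega\in L^1([0,1],\mathbb{R})$ with $\omega>0$ a.e., and assume (H1) $\omega$ is monotonic on $[0,1]$ and (H2) $\inf_{x\in[0,1]}\omega(x)>0$. Fix $c_1\ge 0$ and $c_2\in\mathbb{R}$, not both zero, and for $\lambda\ge 0$ let $\theta(\cdot;\lambda)$ be the absolutely continuous solution on $[0,1]$ of $$\theta'(x;\lambda)=\sqrt{\lambda}\big(\cos^2\theta(x;\lambda)+\omega(x)\sin^2\theta(x;\lambda)\big),\qquad \theta(0;\lambda)=\arctan\frac{\sqrt{\lambda}c_1}{c_2}\in[0,\pi).$$ Define $$H(x;\lambda)=\frac{\sqrt{\lambda}}{2}\int_0^x\big(1-\omega(t)\big)\sin 2\theta(t;\lambda)\,dt,\qquad x\in[0,1].$$ Then $H(x;\lambda)$ is uniformly bounded for all sufficiently large $\lambda>0$: there exist $\Lambda>0$ and $M>0$ such that $|H(x;\lambda)|\le M$ for all $x\in[0,1]$ and all $\lambda\ge\Lambda$.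
   Context: $\theta(0;\lambda)$ is the angle in $[0,\pi)$ whose tangent is $\sqrt{\lambda}c_1/c_2$ (equal to $\pi/2$ when $c_2=0$); $\theta$ is the Prüfer angle of the solution of $-y''=\lambda\omega y$, $y(0)=c_1$, $y'(0)=c_2$. *)

theory Defs
  imports "HOL-Analysis.Analysis"
begin

definition theta0 :: "real \<Rightarrow> real \<Rightarrow> real \<Rightarrow> real" where
  "theta0 c1 c2 l =
     (if c2 = 0 then pi / 2
      else if arctan (sqrt l * c1 / c2) \<ge> 0 then arctan (sqrt l * c1 / c2)
      else arctan (sqrt l * c1 / c2) + pi)"

definition Hfun :: "(real \<Rightarrow> real) \<Rightarrow> (real \<Rightarrow> real \<Rightarrow> real) \<Rightarrow> real \<Rightarrow> real \<Rightarrow> real" where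
  "Hfun w \<theta> x l = sqrt l / 2 * integral {0..x} (\<lambda>t. (1 - w t) * sin (2 * \<theta> t l))"

end

theory Submission
  imports Defs
begin


definition Dq :: "real \<Rightarrow> real \<Rightarrow> real" where "Dq a p = (cos p)\<^sup>2 + a * (sin p)\<^sup>2"
definition Phi :: "real \<Rightarrow> real \<Rightarrow> real" where "Phi a p = - ln (Dq a p)"
definition kk :: "real \<Rightarrow> real \<Rightarrow> real" where "kk a p = (1 - a) * sin (2*p) / Dq a p"

lemma Dq_bounds:
  assumes "0 < m" "m \<le> a" "a \<le> Mw"
  shows "min 1 m \<le> Dq a p" "Dq a p \<le> 1 + Mw"
proof -
  have s: "(sin p)\<^sup>2 + (cos p)\<^sup>2 = 1" by simp
  have "0 \<le> (sin p)\<^sup>2" "0 \<le> (cos p)\<^sup>2" by auto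
  show "min 1 m \<le> Dq a p"
  proof (cases "a \<ge> 1")
    case True
    then have "a * (sin p)\<^sup>2 \<ge> 1 * (sin p)\<^sup>2" using \<open>0 \<le> (sin p)\<^sup>2\<close> by (intro mult_right_mono) auto
    then show ?thesis unfolding Dq_def using s by linarith
  next
    case False
    then have "a \<le> 1" by simp
    then have "1 * (cos p)\<^sup>2 \<ge> a * (cos p)\<^sup>2" using \<open>0 \<le> (cos p)\<^sup>2\<close> by (rule mult_right_mono)
    then have "Dq a p \<ge> a * (cos p)\<^sup>2 + a * (sin p)\<^sup>2" unfolding Dq_def by simp
    also have "a * (cos p)\<^sup>2 + a * (sin p)\<^sup>2 = a" using s by (simp add: distrib_left[symmetric])
    finally have "Dq a p \<ge> a" .
    then show ?thesis using assms by linarith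
  qed
  show "Dq a p \<le> 1 + Mw"
  proof -
    have "(cos p)\<^sup>2 \<le> 1" using sin_cos_squared_add[of p] zero_le_power2[of "sin p"] by linarith
    have "(sin p)\<^sup>2 \<le> 1" using sin_cos_squared_add[of p] zero_le_power2[of "cos p"] by linarith
    have "a * (sin p)\<^sup>2 \<le> Mw * 1"
      using assms \<open>(sin p)\<^sup>2 \<le> 1\<close> by (intro mult_mono) auto
    then show ?thesis unfolding Dq_def using \<open>(cos p)\<^sup>2 \<le> 1\<close> by linarith
  qed
qed

lemma Dq_pos: "0 < m \<Longrightarrow> m \<le> a \<Longrightarrow> a \<le> Mw \<Longrightarrow> 0 < Dq a p"
  using Dq_bounds(1)[of m a Mw p] by linarith

lemma ln_diff_le:
  fixes u v :: real
  assumes "0 < u" "0 < v" shows "\<bar>ln u - ln v\<bar> \<le> \<bar>u - v\<bar> / min u v"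
proof -
  have 1: "ln u - ln v \<le> (u - v) / v" if "0<u" "0<v" for u v :: real
  proof -
    have "ln (u/v) \<le> u/v - 1" using that by (intro ln_le_minus_one) auto
    then show ?thesis using that by (simp add: ln_div diff_divide_distrib)
  qed
  show ?thesis
  proof (cases "u \<le> v")
    case True
    have "ln v - ln u \<le> (v - u) / u" using 1[of v u] assms by blast
    moreover have "ln u \<le> ln v" using True assms by simp
    ultimately show ?thesis using True by (simp add: min_def)
  next
    case False
    have "ln u - ln v \<le> (u - v) / v" using 1 assms by blast
    moreover have "ln v \<le> ln u" using False assms by simp
    ultimately show ?thesis using False by (simp add: min_def)
  qed
qed

lemma Phi_bound:
  assumes "0 < m" "m \<le> a" "a \<le> Mw"
  shows "\<bar>Phi a p\<bar> \<le> ln (1 + Mw) - ln (min 1 m)"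
proof -
  have d: "0 < min 1 m" using assms by simp
  note b = Dq_bounds[OF assms, of p]
  have "ln (min 1 m) \<le> ln (Dq a p)" using b d by simp
  moreover have "ln (Dq a p) \<le> ln (1 + Mw)" using b d by (subst ln_le_cancel_iff) auto
  moreover have "ln (min 1 m) \<le> 0" using d by simp
  moreover have "0 \<le> ln (1+Mw)" using assms by simp
  ultimately show ?thesis unfolding Phi_def by linarith
qed

lemma Phi_lip_a:
  assumes "0 < m" "m \<le> a" "a \<le> Mw" "m \<le> b" "b \<le> Mw"
  shows "\<bar>Phi b p - Phi a p\<bar> \<le> \<bar>b - a\<bar> / m"
proof (cases "sin p = 0")
  case True then show ?thesis unfolding Phi_def Dq_def using assms by simp
next
  case False
  have s2: "0 < (sin p)\<^sup>2" using False by simp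
  have pa: "0 < Dq a p" and pb: "0 < Dq b p" using Dq_pos assms by blast+
  have "\<bar>Phi b p - Phi a p\<bar> = \<bar>ln (Dq b p) - ln (Dq a p)\<bar>" unfolding Phi_def by simp
  also have "\<dots> \<le> \<bar>Dq b p - Dq a p\<bar> / min (Dq b p) (Dq a p)" by (rule ln_diff_le[OF pb pa])
  also have "\<bar>Dq b p - Dq a p\<bar> = \<bar>b - a\<bar> * (sin p)\<^sup>2" unfolding Dq_def
    by (simp add: abs_mult left_diff_distrib[symmetric])
  also have "m * (sin p)\<^sup>2 \<le> min (Dq b p) (Dq a p)"
  proof -
    have "m * (sin p)\<^sup>2 \<le> a * (sin p)\<^sup>2" "m * (sin p)\<^sup>2 \<le> b * (sin p)\<^sup>2"
      using assms s2 by (auto intro: mult_right_mono)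
    then show ?thesis unfolding Dq_def by (simp add: add_increasing)
  qed
  then have "\<bar>b - a\<bar> * (sin p)\<^sup>2 / min (Dq b p) (Dq a p) \<le> \<bar>b - a\<bar> * (sin p)\<^sup>2 / (m * (sin p)\<^sup>2)"
    using assms s2 \<open>0 < Dq a p\<close> \<open>0 < Dq b p\<close> by (intro divide_left_mono) auto
  also have "\<dots> = \<bar>b - a\<bar> / m" using s2 by simp
  finally show ?thesis .
qed


lemma sin_lip: "\<bar>sin x - sin y\<bar> \<le> \<bar>x - y\<bar>" for x y :: real
proof -
  have "\<bar>sin x - sin y\<bar> = 2 * \<bar>sin ((x - y) / 2)\<bar> * \<bar>cos ((x + y) / 2)\<bar>"
    by (simp add: sin_diff_sin abs_mult)
  also have "\<dots> \<le> 2 * \<bar>(x - y) / 2\<bar> * 1"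
    by (intro mult_mono abs_sin_x_le_abs_x) auto
  finally show ?thesis by simp
qed

lemma Phi_deriv:
  assumes "0 < Dq a p"
  shows "(Phi a has_real_derivative kk a p) (at p)"
proof -
  have "((\<lambda>p. - ln ((cos p)\<^sup>2 + a * (sin p)\<^sup>2)) has_real_derivative
     - ((2 * cos p * (- sin p) + a * (2 * sin p * cos p)) / ((cos p)\<^sup>2 + a * (sin p)\<^sup>2))) (at p)"
    using assms unfolding Dq_def
    by (auto intro!: derivative_eq_intros simp: power2_eq_square)
  moreover have "- ((2 * cos p * (- sin p) + a * (2 * sin p * cos p)) / ((cos p)\<^sup>2 + a * (sin p)\<^sup>2)) = kk a p"
    unfolding kk_def Dq_def sin_double by (simp add: divide_simps algebra_simps)
  ultimately show ?thesis unfolding Phi_def[abs_def] Dq_def by simp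
qed

lemma Phi_mvt:
  assumes "0 < m" "m \<le> a" "a \<le> Mw" "p \<le> q"
  shows "\<exists>z. p \<le> z \<and> z \<le> q \<and> Phi a q - Phi a p = (q - p) * kk a z"
proof (cases "p = q")
  case True then show ?thesis by auto
next
  case False
  then have "p < q" using assms by simp
  from MVT2[OF this, of "Phi a" "kk a"] obtain z where "p < z" "z < q" "Phi a q - Phi a p = (q - p) * kk a z"
    using Phi_deriv Dq_pos[OF assms(1-3)] by blast
  then show ?thesis by (intro exI[of _ z]) auto
qed

lemma kk_bound:
  assumes "0 < m" "m \<le> a" "a \<le> Mw"
  shows "\<bar>kk a p\<bar> \<le> (1 + Mw) / min 1 m"
proof -
  have D: "min 1 m \<le> Dq a p" using Dq_bounds[OF assms] by blast
  have d: "0 < min 1 m" using assms by simp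
  have "\<bar>kk a p\<bar> = \<bar>1 - a\<bar> * \<bar>sin (2*p)\<bar> / Dq a p"
    unfolding kk_def using Dq_pos[OF assms, of p] by (simp add: abs_mult)
  also have "\<dots> \<le> (1 + Mw) * 1 / min 1 m"
    using D d assms by (intro frac_le mult_mono) auto
  finally show ?thesis by simp
qed

lemma kk_lip:
  assumes "0 < m" "m \<le> a" "a \<le> Mw"
  shows "\<bar>kk a x - kk a y\<bar> \<le> 4 * (1 + Mw)\<^sup>2 / (min 1 m)\<^sup>2 * \<bar>x - y\<bar>"
proof -
  define d where "d = min 1 m"
  have d: "0 < d" using assms by (simp add: d_def)
  have Dx: "d \<le> Dq a x" "Dq a x \<le> 1 + Mw" and Dy: "d \<le> Dq a y" "Dq a y \<le> 1 + Mw"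
    using Dq_bounds[OF assms] unfolding d_def by blast+
  have Mw: "0 \<le> Mw" using assms by simp
  have eq: "kk a x - kk a y = (1 - a) * (sin (2*x) * Dq a y - sin (2*y) * Dq a x) / (Dq a x * Dq a y)"
    unfolding kk_def using Dx Dy d by (simp add: field_simps)
  have s2: "\<bar>sin (2*x) - sin (2*y)\<bar> \<le> 2 * \<bar>x - y\<bar>"
  proof -
    have "\<bar>2*x - 2*y\<bar> = 2 * \<bar>x - y\<bar>" using abs_mult[of "2::real" "x-y"] by (simp add: right_diff_distrib)
    then show ?thesis using sin_lip[of "2*x" "2*y"] by linarith
  qed
  have sq: "\<bar>(sin x)\<^sup>2 - (sin y)\<^sup>2\<bar> \<le> 2 * \<bar>x - y\<bar>"
  proof -
    have "\<bar>(sin x)\<^sup>2 - (sin y)\<^sup>2\<bar> = \<bar>sin x - sin y\<bar> * \<bar>sin x + sin y\<bar>"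
      by (simp add: power2_eq_square abs_mult[symmetric] algebra_simps)
    also have "\<dots> \<le> \<bar>x - y\<bar> * 2"
    proof (intro mult_mono sin_lip)
      show "\<bar>sin x + sin y\<bar> \<le> 2" using abs_sin_le_one[of x] abs_sin_le_one[of y] by linarith
    qed auto
    finally show ?thesis by simp
  qed
  have Ddiff: "Dq a y - Dq a x = (a - 1) * ((sin y)\<^sup>2 - (sin x)\<^sup>2)"
    unfolding Dq_def using sin_cos_squared_add[of x] sin_cos_squared_add[of y] by algebra
  have a1: "\<bar>a - 1\<bar> \<le> 1 + Mw" "\<bar>1 - a\<bar> \<le> 1 + Mw" using assms by auto
  have "\<bar>sin (2*x) * Dq a y - sin (2*y) * Dq a x\<bar>
      = \<bar>(sin (2*x) - sin (2*y)) * Dq a y + sin (2*y) * (Dq a y - Dq a x)\<bar>"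
    by (simp add: algebra_simps)
  also have "\<dots> \<le> \<bar>sin (2*x) - sin (2*y)\<bar> * Dq a y + \<bar>sin (2*y)\<bar> * \<bar>Dq a y - Dq a x\<bar>"
    using Dy d by (simp add: abs_mult abs_triangle_ineq order_trans[OF abs_triangle_ineq])
  also have "\<dots> \<le> (2 * \<bar>x - y\<bar>) * (1 + Mw) + 1 * ((1 + Mw) * (2 * \<bar>x - y\<bar>))"
    unfolding Ddiff abs_mult
    by (intro add_mono mult_mono s2 sq a1 Dy) (use d Dy sq abs_minus_commute[of "(sin x)\<^sup>2" "(sin y)\<^sup>2"] in auto)
  finally have N: "\<bar>sin (2*x) * Dq a y - sin (2*y) * Dq a x\<bar> \<le> 4 * (1 + Mw) * \<bar>x - y\<bar>" by (simp add: algebra_simps)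
  have "\<bar>kk a x - kk a y\<bar> = \<bar>1 - a\<bar> * \<bar>sin (2*x) * Dq a y - sin (2*y) * Dq a x\<bar> / (Dq a x * Dq a y)"
    unfolding eq using Dx Dy d by (simp add: abs_mult)
  also have "\<dots> \<le> (1 + Mw) * (4 * (1 + Mw) * \<bar>x - y\<bar>) / (d * d)"
    using Dx Dy d Mw by (intro frac_le mult_mono a1 N mult_pos_pos) auto
  finally show ?thesis unfolding d_def by (simp add: power2_eq_square algebra_simps)
qed

lemma Q_bound:
  assumes "0 < m" "m \<le> a" "a \<le> Mw" "m \<le> b" "b \<le> Mw"
  shows "\<bar>(1 - b) * sin (2*x) - kk a y * Dq b x\<bar>
     \<le> (1 + (1 + Mw) / min 1 m) * \<bar>b - a\<bar> + 4 * (1 + Mw)\<^sup>2 / (min 1 m)\<^sup>2 * (1 + Mw) * \<bar>x - y\<bar>"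
proof -
  have Da: "0 < Dq a x" using Dq_pos[OF assms(1-3)] by blast
  have kx: "kk a x * Dq a x = (1 - a) * sin (2*x)" unfolding kk_def using Da by simp
  have Db: "Dq b x = Dq a x + (b - a) * (sin x)\<^sup>2" unfolding Dq_def by (simp add: algebra_simps)
  have eq: "(1 - b) * sin (2*x) - kk a y * Dq b x
     = (a - b) * sin (2*x) + (kk a x - kk a y) * Dq a x - kk a y * ((b - a) * (sin x)\<^sup>2)"
    unfolding Db using kx by (simp add: algebra_simps)
  have s1: "\<bar>sin (2*x)\<bar> \<le> 1" by simp
  have s2: "(sin x)\<^sup>2 \<le> 1" using sin_cos_squared_add[of x] zero_le_power2[of "cos x"] by linarith
  have "\<bar>(1 - b) * sin (2*x) - kk a y * Dq b x\<bar>
     \<le> \<bar>a - b\<bar> * \<bar>sin (2*x)\<bar> + \<bar>kk a x - kk a y\<bar> * Dq a x + \<bar>kk a y\<bar> * (\<bar>b - a\<bar> * (sin x)\<^sup>2)"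
    unfolding eq using Da by (simp add: abs_mult order_trans[OF abs_triangle_ineq4] abs_triangle_ineq
        order_trans[OF abs_triangle_ineq] add_mono)
  also have "\<dots> \<le> \<bar>b - a\<bar> * 1 + (4 * (1 + Mw)\<^sup>2 / (min 1 m)\<^sup>2 * \<bar>x - y\<bar>) * (1 + Mw)
      + (1 + Mw) / min 1 m * (\<bar>b - a\<bar> * 1)"
    by (intro add_mono mult_mono kk_lip[OF assms(1-3)] kk_bound[OF assms(1-3)] Dq_bounds[OF assms(1-3)] s1 s2)
       (use assms Da in auto)
  finally show ?thesis by (simp add: algebra_simps)
qed


lemma tele:
  fixes J u v :: "nat \<Rightarrow> real" and F :: "real \<Rightarrow> real \<Rightarrow> real"
  assumes cell: "\<And>i. i < N \<Longrightarrow> \<bar>J (Suc i) - J i - (F (u i) (v (Suc i)) - F (u i) (v i))\<bar> \<le> \<alpha> * \<bar>u (Suc i) - u i\<bar> + \<beta>"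
    and lip: "\<And>i. i < N \<Longrightarrow> \<bar>F (u (Suc i)) (v (Suc i)) - F (u i) (v (Suc i))\<bar> \<le> L * \<bar>u (Suc i) - u i\<bar>"
    and mono: "(\<forall>i j. i \<le> j \<longrightarrow> j \<le> N \<longrightarrow> u i \<le> u j) \<or> (\<forall>i j. i \<le> j \<longrightarrow> j \<le> N \<longrightarrow> u j \<le> u i)"
  shows "\<bar>J N - J 0 - (F (u N) (v N) - F (u 0) (v 0))\<bar> \<le> (L + \<alpha>) * \<bar>u N - u 0\<bar> + real N * \<beta>"
proof -
  have "n \<le> N \<Longrightarrow> \<bar>J n - J 0 - (F (u n) (v n) - F (u 0) (v 0))\<bar> \<le> (L + \<alpha>) * \<bar>u n - u 0\<bar> + real n * \<beta>" for n
  proof (induction n)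
    case 0 then show ?case by simp
  next
    case (Suc n)
    then have n: "n < N" by simp
    have IH: "\<bar>J n - J 0 - (F (u n) (v n) - F (u 0) (v 0))\<bar> \<le> (L + \<alpha>) * \<bar>u n - u 0\<bar> + real n * \<beta>"
      using Suc by simp
    have ab: "\<bar>u n - u 0\<bar> + \<bar>u (Suc n) - u n\<bar> = \<bar>u (Suc n) - u 0\<bar>"
    proof -
      from mono have "(u 0 \<le> u n \<and> u n \<le> u (Suc n)) \<or> (u n \<le> u 0 \<and> u (Suc n) \<le> u n)"
      proof
        assume h: "\<forall>i j. i \<le> j \<longrightarrow> j \<le> N \<longrightarrow> u i \<le> u j"
        have "u 0 \<le> u n" using h n by simp
        moreover have "u n \<le> u (Suc n)" using h n by simp
        ultimately show ?thesis by blast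
      next
        assume h: "\<forall>i j. i \<le> j \<longrightarrow> j \<le> N \<longrightarrow> u j \<le> u i"
        have "u n \<le> u 0" using h n by simp
        moreover have "u (Suc n) \<le> u n" using h n by simp
        ultimately show ?thesis by blast
      qed
      then show ?thesis by auto
    qed
    have eq: "J (Suc n) - J 0 - (F (u (Suc n)) (v (Suc n)) - F (u 0) (v 0))
       = (J n - J 0 - (F (u n) (v n) - F (u 0) (v 0)))
         + (J (Suc n) - J n - (F (u n) (v (Suc n)) - F (u n) (v n)))
         - (F (u (Suc n)) (v (Suc n)) - F (u n) (v (Suc n)))" by simp
    have "\<bar>J (Suc n) - J 0 - (F (u (Suc n)) (v (Suc n)) - F (u 0) (v 0))\<bar>
       \<le> ((L + \<alpha>) * \<bar>u n - u 0\<bar> + real n * \<beta>) + (\<alpha> * \<bar>u (Suc n) - u n\<bar> + \<beta>) + L * \<bar>u (Suc n) - u n\<bar>"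
      unfolding eq using IH cell[OF n] lip[OF n] by linarith
    also have "\<dots> = (L + \<alpha>) * (\<bar>u n - u 0\<bar> + \<bar>u (Suc n) - u n\<bar>) + real (Suc n) * \<beta>"
      by (simp add: algebra_simps)
    finally show ?case unfolding ab .
  qed
  then show ?thesis by simp
qed


lemma cell:
  fixes w th :: "real \<Rightarrow> real" and l m hi s t :: real
  assumes l: "0 \<le> l" and m: "0 < m"
    and wb: "\<And>x. x \<in> {0..1} \<Longrightarrow> m \<le> w x \<and> w x \<le> hi"
    and wm: "\<And>s \<tau> t. 0 \<le> s \<Longrightarrow> s \<le> \<tau> \<Longrightarrow> \<tau> \<le> t \<Longrightarrow> t \<le> 1 \<Longrightarrow> \<bar>w \<tau> - w s\<bar> \<le> \<bar>w t - w s\<bar>"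
    and thint: "\<And>s t. 0 \<le> s \<Longrightarrow> s \<le> t \<Longrightarrow> t \<le> 1 \<Longrightarrow>
        ((\<lambda>\<tau>. sqrt l * Dq (w \<tau>) (th \<tau>)) has_integral (th t - th s)) {s..t}"
    and Pint: "(\<lambda>\<tau>. sqrt l * ((1 - w \<tau>) * sin (2 * th \<tau>))) integrable_on {s..t}"
    and st: "0 \<le> s" "s \<le> t" "t \<le> 1"
  shows "\<bar>integral {s..t} (\<lambda>\<tau>. sqrt l * ((1 - w \<tau>) * sin (2 * th \<tau>))) - (Phi (w s) (th t) - Phi (w s) (th s))\<bar>
     \<le> (t - s) * sqrt l * (1 + (1 + hi) / min 1 m) * \<bar>w t - w s\<bar>
        + l * (4 * (1 + hi)\<^sup>2 / (min 1 m)\<^sup>2 * (1 + hi)) * (1 + hi) * (t - s)\<^sup>2"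
proof -
  define C1 where "C1 = 1 + (1 + hi) / min 1 m"
  define C3 where "C3 = 4 * (1 + hi)\<^sup>2 / (min 1 m)\<^sup>2 * (1 + hi)"
  define f where "f = (\<lambda>\<tau>. sqrt l * Dq (w \<tau>) (th \<tau>))"
  define P where "P = (\<lambda>\<tau>. sqrt l * ((1 - w \<tau>) * sin (2 * th \<tau>)))"
  have ws: "m \<le> w s" "w s \<le> hi" using wb st by auto
  have hi: "m \<le> hi" using ws by simp
  have C1: "0 \<le> C1" unfolding C1_def using m hi by simp
  have C3: "0 \<le> C3" unfolding C3_def using m hi by simp
  have fnn: "0 \<le> f \<tau>" if "\<tau> \<in> {0..1}" for \<tau>
    unfolding f_def using Dq_pos[of m "w \<tau>" hi "th \<tau>"] wb[OF that] m l by simp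
  have fub: "f \<tau> \<le> sqrt l * (1 + hi)" if "\<tau> \<in> {0..1}" for \<tau>
    unfolding f_def using Dq_bounds(2)[of m "w \<tau>" hi "th \<tau>"] wb[OF that] m l
    by (intro mult_left_mono) auto
  have thmono: "th a \<le> th b" if "0 \<le> a" "a \<le> b" "b \<le> 1" for a b
  proof -
    have "0 \<le> th b - th a"
      by (rule has_integral_nonneg[OF thint[OF that, folded f_def]]) (use fnn that in auto)
    then show ?thesis by simp
  qed
  have thlip: "th t - th s \<le> sqrt l * (1 + hi) * (t - s)"
  proof -
    have "norm (th t - th s) \<le> sqrt l * (1 + hi) * measure lborel (cbox s t)"
      by (rule has_integral_bound[of _ f]) (use thint[OF st, folded f_def] fnn fub st l hi m in \<open>auto simp: cbox_interval\<close>)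
    then show ?thesis using st by (simp add: content_real)
  qed
  obtain z where z: "th s \<le> z" "z \<le> th t" and mvt: "Phi (w s) (th t) - Phi (w s) (th s) = (th t - th s) * kk (w s) z"
    using Phi_mvt[OF m ws, of "th s" "th t"] thmono st by auto
  have fint: "(f has_integral (th t - th s)) {s..t}" using thint[OF st] unfolding f_def .
  have kf: "((\<lambda>\<tau>. kk (w s) z * f \<tau>) has_integral (Phi (w s) (th t) - Phi (w s) (th s))) {s..t}"
    unfolding mvt using has_integral_mult_right[OF fint, of "kk (w s) z"] by (simp add: mult.commute)
  have Pi: "(P has_integral integral {s..t} P) {s..t}" using Pint unfolding P_def by blast
  have D: "((\<lambda>\<tau>. P \<tau> - kk (w s) z * f \<tau>) has_integral
      (integral {s..t} P - (Phi (w s) (th t) - Phi (w s) (th s)))) {s..t}"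
    by (rule has_integral_diff[OF Pi kf])
  define Bd where "Bd = sqrt l * (C1 * \<bar>w t - w s\<bar> + C3 * (sqrt l * (1 + hi) * (t - s)))"
  have pt: "norm (P \<tau> - kk (w s) z * f \<tau>) \<le> Bd" if \<tau>: "\<tau> \<in> cbox s t" for \<tau>
  proof -
    have \<tau>': "s \<le> \<tau>" "\<tau> \<le> t" using \<tau> by (auto simp: cbox_interval)
    have wt: "m \<le> w \<tau>" "w \<tau> \<le> hi" using wb \<tau>' st by auto
    have eq: "P \<tau> - kk (w s) z * f \<tau> = sqrt l * ((1 - w \<tau>) * sin (2 * th \<tau>) - kk (w s) z * Dq (w \<tau>) (th \<tau>))"
      unfolding P_def f_def by (simp add: algebra_simps)
    have Q: "\<bar>(1 - w \<tau>) * sin (2 * th \<tau>) - kk (w s) z * Dq (w \<tau>) (th \<tau>)\<bar>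
        \<le> C1 * \<bar>w \<tau> - w s\<bar> + C3 * \<bar>th \<tau> - z\<bar>"
      using Q_bound[OF m ws wt, of "th \<tau>" z] unfolding C1_def C3_def by simp
    have a: "\<bar>w \<tau> - w s\<bar> \<le> \<bar>w t - w s\<bar>" using wm \<tau>' st by auto
    have b: "\<bar>th \<tau> - z\<bar> \<le> sqrt l * (1 + hi) * (t - s)"
    proof -
      have "th s \<le> th \<tau>" "th \<tau> \<le> th t" using thmono \<tau>' st by auto
      then have "\<bar>th \<tau> - z\<bar> \<le> th t - th s" using z by auto
      then show ?thesis using thlip by linarith
    qed
    have "C1 * \<bar>w \<tau> - w s\<bar> + C3 * \<bar>th \<tau> - z\<bar> \<le> C1 * \<bar>w t - w s\<bar> + C3 * (sqrt l * (1 + hi) * (t - s))"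
      by (intro add_mono mult_left_mono a b C1 C3)
    with Q have "\<bar>(1 - w \<tau>) * sin (2 * th \<tau>) - kk (w s) z * Dq (w \<tau>) (th \<tau>)\<bar> \<le> C1 * \<bar>w t - w s\<bar> + C3 * (sqrt l * (1 + hi) * (t - s))"
      by linarith
    then show ?thesis unfolding eq Bd_def real_norm_def abs_mult using l
      by (simp add: mult_left_mono)
  qed
  have Bd0: "0 \<le> Bd" unfolding Bd_def using C1 C3 l hi m st by (intro mult_nonneg_nonneg add_nonneg_nonneg) auto
  have "norm (integral {s..t} P - (Phi (w s) (th t) - Phi (w s) (th s))) \<le> Bd * measure lborel (cbox s t)"
    by (rule has_integral_bound[OF Bd0 _ pt]) (use D in \<open>simp add: cbox_interval\<close>)
  also have "\<dots> = Bd * (t - s)" using st by (simp add: cbox_interval content_real)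
  also have "\<dots> = (t - s) * sqrt l * C1 * \<bar>w t - w s\<bar> + l * C3 * (1 + hi) * (t - s)\<^sup>2"
    unfolding Bd_def using l by (simp add: algebra_simps power2_eq_square)
  finally show ?thesis unfolding P_def C1_def C3_def by simp
qed



theorem lemma3p3:
  fixes w :: "real \<Rightarrow> real" and \<theta> :: "real \<Rightarrow> real \<Rightarrow> real" and c1 c2 :: real
  assumes w_L1: "w absolutely_integrable_on {0..1}"
    and w_pos: "AE x in lebesgue_on {0..1}. w x > 0"
    and H1: "mono_on {0..1} w \<or> antimono_on {0..1} w"
    and H2: "(INF x\<in>{0..1}. w x) > 0"
    and c1: "c1 \<ge> 0"
    and c_nz: "c1 \<noteq> 0 \<or> c2 \<noteq> 0"
    and init: "\<And>l. l \<ge> 0 \<Longrightarrow> \<theta> 0 l = theta0 c1 c2 l"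
    and ode: "\<And>l x. l \<ge> 0 \<Longrightarrow> x \<in> {0..1} \<Longrightarrow>
       ((\<lambda>t. sqrt l * ((cos (\<theta> t l))\<^sup>2 + w t * (sin (\<theta> t l))\<^sup>2))
          has_integral (\<theta> x l - \<theta> 0 l)) {0..x}"
  shows "\<exists>\<Lambda>>0. \<exists>M>0. \<forall>l\<ge>\<Lambda>. \<forall>x\<in>{0..1}. \<bar>Hfun w \<theta> x l\<bar> \<le> M"
proof -
  have mono_or: "(\<forall>a b. 0 \<le> a \<longrightarrow> a \<le> b \<longrightarrow> b \<le> 1 \<longrightarrow> w a \<le> w b) \<or>
                 (\<forall>a b. 0 \<le> a \<longrightarrow> a \<le> b \<longrightarrow> b \<le> 1 \<longrightarrow> w b \<le> w a)"
  proof (rule disjE[OF H1])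
    assume h: "mono_on {0..1} w"
    show ?thesis by (rule disjI1) (auto intro!: mono_onD[OF h])
  next
    assume h: "antimono_on {0..1} w"
    show ?thesis by (rule disjI2) (auto intro!: monotone_onD[OF h])
  qed
  define lo where "lo = min (w 0) (w 1)"
  define hi where "hi = max (w 0) (w 1)"
  have wr: "lo \<le> w x \<and> w x \<le> hi" if "x \<in> {0..1}" for x
    using mono_or that unfolding lo_def hi_def by (auto simp: min_def max_def) (smt (verit))+
  define m where "m = (INF x\<in>{0..1}. w x)"
  have m: "0 < m" using H2 unfolding m_def .
  have bdd: "bdd_below (w ` {0..1})" using wr by (intro bdd_belowI2[of _ lo]) auto
  have wb: "m \<le> w x \<and> w x \<le> hi" if "x \<in> {0..1}" for x
    using cINF_lower[OF bdd that] wr[OF that] unfolding m_def by auto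
  have hi: "m \<le> hi" using wb[of 0] by auto
  have wm: "\<bar>w \<tau> - w s\<bar> \<le> \<bar>w t - w s\<bar>" if "0 \<le> s" "s \<le> \<tau>" "\<tau> \<le> t" "t \<le> 1" for s \<tau> t
    using mono_or that by (smt (verit))
  have wint: "w integrable_on {0..1}" using w_L1 absolutely_integrable_on_def by blast
  define C1 where "C1 = 1 + (1 + hi) / min 1 m"
  define C3 where "C3 = 4 * (1 + hi)\<^sup>2 / (min 1 m)\<^sup>2 * (1 + hi)"
  define B where "B = ln (1 + hi) - ln (min 1 m)"
  define K where "K = 2 * B + (1 / m + 1) * (hi - m) + 1"
  have main: "\<bar>Hfun w \<theta> x l\<bar> \<le> \<bar>K\<bar> / 2" if l: "0 \<le> l" and x: "x \<in> {0..1}" for l x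
  proof -
    define th where "th = (\<lambda>\<tau>. \<theta> \<tau> l)"
    define f where "f = (\<lambda>\<tau>. sqrt l * Dq (w \<tau>) (th \<tau>))"
    define P where "P = (\<lambda>\<tau>. sqrt l * ((1 - w \<tau>) * sin (2 * th \<tau>)))"
    have ode': "(f has_integral (th t - th 0)) {0..t}" if "t \<in> {0..1}" for t
      using ode[OF l that] unfolding f_def th_def Dq_def .
    have f01: "f integrable_on {0..1}" using ode'[of 1] by auto
    have thint: "(f has_integral (th t - th s)) {s..t}" if "0 \<le> s" "s \<le> t" "t \<le> 1" for s t
    proof -
      have "f integrable_on {0..t}" using ode'[of t] that by auto
      then have "integral {0..s} f + integral {s..t} f = integral {0..t} f"
        by (rule Henstock_Kurzweil_Integration.integral_combine[rotated 2]) (use that in auto)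
      moreover have "integral {0..s} f = th s - th 0" "integral {0..t} f = th t - th 0"
        using ode'[of s] ode'[of t] that by (auto intro: integral_unique)
      moreover have "f integrable_on {s..t}" using f01 that by (intro integrable_on_subinterval) auto
      ultimately show ?thesis by (metis add_diff_cancel_left' diff_diff_eq2 has_integral_integral diff_add_cancel add.commute)
    qed
    have thc: "continuous_on {0..1} th"
    proof -
      have "continuous_on {0..1} (\<lambda>t. th 0 + integral {0..t} f)"
        by (intro continuous_intros indefinite_integral_continuous_1 f01)
      moreover have "th 0 + integral {0..t} f = th t" if "t \<in> {0..1}" for t
        using integral_unique[OF ode'[OF that]] by simp
      ultimately show ?thesis by (rule continuous_on_eq)
    qed
    have P01: "P integrable_on {0..1}"
    proof -
      have sc: "continuous_on {0..1} (\<lambda>\<tau>. sin (2 * th \<tau>))" by (intro continuous_intros thc)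
      have "(\<lambda>\<tau>. sin (2 * th \<tau>) * w \<tau>) absolutely_integrable_on {0..1}"
      proof (rule absolutely_integrable_bounded_measurable_product_real[OF _ _ _ w_L1])
        show "(\<lambda>\<tau>. sin (2 * th \<tau>)) \<in> borel_measurable (lebesgue_on {0..1})"
          by (rule continuous_imp_measurable_on_sets_lebesgue[OF sc]) auto
        show "bounded ((\<lambda>\<tau>. sin (2 * th \<tau>)) ` {0..1})"
          by (rule boundedI[of _ 1]) auto
      qed auto
      then have i1: "(\<lambda>\<tau>. sin (2 * th \<tau>) * w \<tau>) integrable_on {0..1}"
        using absolutely_integrable_on_def by blast
      have i2: "(\<lambda>\<tau>. sin (2 * th \<tau>)) integrable_on {0..1}"
        using sc by (intro integrable_continuous_interval)
      have "(\<lambda>\<tau>. sqrt l * sin (2 * th \<tau>) - sqrt l * (sin (2 * th \<tau>) * w \<tau>)) integrable_on {0..1}"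
        by (intro integrable_diff integrable_on_mult_right i1 i2)
      then show ?thesis unfolding P_def by (simp add: algebra_simps)
    qed
    have Psub: "P integrable_on {a..b}" if "0 \<le> a" "b \<le> 1" for a b
      using P01 that by (intro integrable_on_subinterval) auto
    obtain N :: nat where N: "sqrt l * C1 + l * C3 * (1 + hi) + 1 < real N"
      using reals_Archimedean2 by blast
    have C1: "0 \<le> C1" unfolding C1_def using m hi by simp
    have C3: "0 \<le> C3" unfolding C3_def using m hi by simp
    have Npos: "0 < real N" using N C1 C3 l hi m
      by (smt (verit) mult_nonneg_nonneg real_sqrt_ge_zero)
    define s where "s = (\<lambda>i::nat. x * real i / real N)"
    have x01: "0 \<le> x" "x \<le> 1" using x by auto
    have s0: "s 0 = 0" and sN: "s N = x" unfolding s_def using Npos by auto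
    have sd: "s (Suc i) - s i = x / real N" for i unfolding s_def by (simp add: add_divide_distrib distrib_left)
    have sle: "s i \<le> s j" if "i \<le> j" for i j
      unfolding s_def using x01 Npos that by (intro divide_right_mono mult_left_mono) auto
    have s_nn: "0 \<le> s i" for i unfolding s_def using x01 Npos by simp
    have s_le1: "s i \<le> 1" if "i \<le> N" for i
      using sle[OF that] sN x01 by simp
    define J where "J = (\<lambda>i. integral {0..s i} P)"
    define u where "u = (\<lambda>i. w (s i))"
    define v where "v = (\<lambda>i. th (s i))"
    define \<alpha> where "\<alpha> = x / real N * sqrt l * C1"
    define \<beta> where "\<beta> = l * C3 * (1 + hi) * (x / real N)\<^sup>2"
    have tel: "\<bar>J N - J 0 - (Phi (u N) (v N) - Phi (u 0) (v 0))\<bar> \<le> (1 / m + \<alpha>) * \<bar>u N - u 0\<bar> + real N * \<beta>"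
    proof (rule tele[where J=J and u=u and v=v and F=Phi and L="1 / m" and \<alpha>=\<alpha> and \<beta>=\<beta> and N=N])
      fix i assume i: "i < N"
      have a: "0 \<le> s i" "s i \<le> s (Suc i)" "s (Suc i) \<le> 1" using s_nn sle s_le1 i by auto
      have "integral {0..s i} P + integral {s i..s (Suc i)} P = integral {0..s (Suc i)} P"
        using a Psub[of 0 "s (Suc i)"] by (intro Henstock_Kurzweil_Integration.integral_combine) auto
      then have Jd: "J (Suc i) - J i = integral {s i..s (Suc i)} P" unfolding J_def by linarith
      have c: "\<bar>integral {s i..s (Suc i)} P - (Phi (w (s i)) (th (s (Suc i))) - Phi (w (s i)) (th (s i)))\<bar>
         \<le> (s (Suc i) - s i) * sqrt l * (1 + (1 + hi) / min 1 m) * \<bar>w (s (Suc i)) - w (s i)\<bar>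
           + l * (4 * (1 + hi)\<^sup>2 / (min 1 m)\<^sup>2 * (1 + hi)) * (1 + hi) * (s (Suc i) - s i)\<^sup>2"
        unfolding P_def
        by (rule cell[OF l m wb wm]) (use thint[unfolded f_def] Psub[unfolded P_def] a in auto)
      show "\<bar>J (Suc i) - J i - (Phi (u i) (v (Suc i)) - Phi (u i) (v i))\<bar> \<le> \<alpha> * \<bar>u (Suc i) - u i\<bar> + \<beta>"
        using c unfolding Jd sd u_def v_def \<alpha>_def \<beta>_def C1_def C3_def by simp
    next
      fix i assume i: "i < N"
      have "s i \<in> {0..1}" "s (Suc i) \<in> {0..1}" using s_nn s_le1 i by auto
      then show "\<bar>Phi (u (Suc i)) (v (Suc i)) - Phi (u i) (v (Suc i))\<bar> \<le> 1 / m * \<bar>u (Suc i) - u i\<bar>"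
        unfolding u_def using Phi_lip_a[OF m, of "w (s i)" hi "w (s (Suc i))"] wb by auto
    next
      show "(\<forall>i j. i \<le> j \<longrightarrow> j \<le> N \<longrightarrow> u i \<le> u j) \<or> (\<forall>i j. i \<le> j \<longrightarrow> j \<le> N \<longrightarrow> u j \<le> u i)"
        using mono_or unfolding u_def by (meson s_nn s_le1 sle)
    qed
    have J0: "J 0 = 0" unfolding J_def s0 by simp
    have u0N: "u 0 \<in> {m..hi}" "u N \<in> {m..hi}" unfolding u_def using wb s_nn s_le1 by auto
    have PhiB: "\<bar>Phi (u N) (v N)\<bar> \<le> B" "\<bar>Phi (u 0) (v 0)\<bar> \<le> B"
      unfolding B_def using Phi_bound[OF m] u0N by auto
    have \<alpha>1: "\<alpha> \<le> 1"
    proof -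
      have "\<alpha> = x * (sqrt l * C1) / real N" unfolding \<alpha>_def by simp
      also have "\<dots> \<le> 1 * (sqrt l * C1) / real N"
        using x01 C1 l Npos by (intro divide_right_mono mult_right_mono) auto
      also have "\<dots> \<le> 1" using N Npos C3 l hi m by (simp add: divide_simps) (smt (verit) mult_nonneg_nonneg)
      finally show ?thesis .
    qed
    have \<alpha>0: "0 \<le> \<alpha>" unfolding \<alpha>_def using x01 Npos C1 l by simp
    have \<beta>1: "real N * \<beta> \<le> 1"
    proof -
      have "real N * \<beta> = x\<^sup>2 * (l * C3 * (1 + hi)) / real N" unfolding \<beta>_def using Npos
        by (simp add: power2_eq_square field_simps)
      also have "\<dots> \<le> 1 * (l * C3 * (1 + hi)) / real N"
        using x01 C3 l Npos hi m by (intro divide_right_mono mult_right_mono) (auto simp: abs_square_le_1)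
      also have "\<dots> \<le> 1" using N Npos C1 l hi m by (simp add: divide_simps) (smt (verit) mult_nonneg_nonneg real_sqrt_ge_zero)
      finally show ?thesis .
    qed
    have ud: "\<bar>u N - u 0\<bar> \<le> hi - m" using u0N by auto
    have "(1 / m + \<alpha>) * \<bar>u N - u 0\<bar> \<le> (1 / m + 1) * (hi - m)"
      using ud \<alpha>1 \<alpha>0 m by (intro mult_mono) auto
    then have "\<bar>J N\<bar> \<le> K" using tel PhiB \<beta>1 J0 unfolding K_def by linarith
    moreover have "J N = sqrt l * integral {0..x} (\<lambda>t. (1 - w t) * sin (2 * \<theta> t l))"
      unfolding J_def sN P_def th_def by simp
    ultimately show ?thesis unfolding Hfun_def using l by (simp add: abs_mult)
  qed
  have "\<forall>l\<ge>1. \<forall>x\<in>{0..1}. \<bar>Hfun w \<theta> x l\<bar> \<le> \<bar>K\<bar> / 2 + 1"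
  proof (intro allI impI ballI)
    fix l x :: real assume "1 \<le> l" "x \<in> {0..1}"
    then have "\<bar>Hfun w \<theta> x l\<bar> \<le> \<bar>K\<bar> / 2" by (intro main) auto
    then show "\<bar>Hfun w \<theta> x l\<bar> \<le> \<bar>K\<bar> / 2 + 1" by linarith
  qed
  moreover have "(0::real) < \<bar>K\<bar> / 2 + 1" by simp
  ultimately show ?thesis by (intro exI[of _ 1]) auto
qed

end
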